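(* Let $\mathcal{M}^{(N)}$ be a symmetric weakly coupled MDP (WCMDP) with discount factor $\gamma\in[0,1)$. Let $\Pi^*_{\mathbf{1}/N,\mathrm{PI}}$ denote the set of stationary Markov policies that are permutation invariant and that maximize the utilitarian objective $\mathrm{GGF}_{\mathbf{1}/N}[\mathbf{V}_0^{\pi}]=\frac1N\sum_{n=1}^N V^{\pi}_{0,n}$ over all stationary Markov policies $\pi$. Then $\Pi^*_{\mathbf{1}/N,\mathrm{PI}}$ is non-empty, and every $\pi^*\in\Pi^*_{\mathbf{1}/N,\mathrm{PI}}$ satisfies \[ \mathrm{GGF}_{\mathbf{w}}\big[\mathbf{V}_0^{\pi^*}\big]=\max_{\pi}\mathrm{GGF}_{\mathbf{w}}\big[\mathbf{V}_0^{\pi}\big] \] for every weight vector $\mathbf{w}=(w_1,\dots,w_N)$ in the probability simplex with $w_1\ge w_2\ge\cdots\ge w_N$, where the maximum is over all stationary Markov policies.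
   Context: A WCMDP consists of $N$ sub-MDPs $n\in[N]$, each with finite state set $\mathcal{S}_n$, finite action set $\mathcal{A}_n$, transition kernel $p_n(s'|s,a)$ and reward $r_n(s,a)\in\mathbb{R}$. The joint state space is $\mathcal{S}^{(N)}=\prod_n\mathcal{S}_n$; the joint feasible action set is $\mathcal{A}^{(N)}=\{(a_1,\dots,a_N): a_n\in\mathcal{A}_n,\ \sum_{n=1}^N d_{k,n}(a_n)\le b_k\ \forall k\in[K]\}$ with $d_{k,n}\ge 0$, $b_k\ge0$, and an idle action consuming no resource so this set is non-empty. Joint transitions are $P^{(N)}(\mathbf{s}'|\mathbf{s},\mathbf{a})=\prod_{n}p_n(s'_n|s_n,a_n)$ and the vector reward is $\mathbf{r}(\mathbf{s},\mathbf{a})=(r_1(s_1,a_1),\dots,r_N(s_N,a_N))$. The initial joint state is drawn from a distribution $\boldsymbol{\mu}$ on $\mathcal{S}^{(N)}$. A stationary Markov policy $\pi$ gives probabilities $\pi(\mathbf{s},\mathbf{a})$ over $\mathbf{a}\in\mathcal{A}^{(N)}$ for each $\mathbf{s}$. The value vector is $\mathbf{V}_0^{\pi}=\mathbb{E}_{\pi}\big[\sum_{t\ge0}\gamma^t\mathbf{r}(\mathbf{s}_t,\mathbf{a}_t)\,\big|\,\mathbf{s}_0\sim\boldsymbol{\mu}\big]\in\mathbb{R}^N$, with components $V^{\pi}_{0,n}$. Permutations: for a permutation $\sigma$ of $[N]$, the permutation operator $Q$ acts on any $N$-tuple $\mathbf{v}$ by $(Q\mathbf{v})_n=v_{\sigma(n)}$;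 it acts in the same way on joint states and joint actions. $\mathcal{G}^N$ denotes the set of all $N!$ such operators. The WCMDP is symmetric if: (1) all sub-MDPs are identical ($\mathcal{S}_n=\mathcal{S}$, $\mathcal{A}_n=\mathcal{A}$, $p_n=p$, $r_n=r$ for all $n$); (2) resource consumption is symmetric ($d_{k,n}=d_k$ for all $n$); (3) $\boldsymbol{\mu}(\mathbf{s}_0)=\boldsymbol{\mu}(Q\mathbf{s}_0)$ for all $\mathbf{s}_0$ and all $Q\in\mathcal{G}^N$. A stationary Markov policy $\pi$ is permutation invariant if $\pi(\mathbf{s},\mathbf{a})=\pi(Q\mathbf{s},Q\mathbf{a})$ for all $Q\in\mathcal{G}^N$, $\mathbf{s}$, $\mathbf{a}$. Generalized Gini function: for $\mathbf{v}\in\mathbb{R}^N$ and weights $\mathbf{w}$ in the probability simplex with $w_1\ge\dots\ge w_N$, $\mathrm{GGF}_{\mathbf{w}}[\mathbf{v}]=\min_{\sigma}\sum_{n=1}^N w_n v_{\sigma(n)}$, the minimum over all permutations $\sigma$ of $[N]$. The utilitarian case is $\mathbf{w}=\mathbf{1}/N$, giving $\mathrm{GGF}_{\mathbf{1}/N}[\mathbf{v}]=\frac1N\sum_n v_n$. *)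

theory Defs
  imports "HOL-Analysis.Analysis" "HOL-Combinatorics.Permutations"
begin

text \<open>Symmetric weakly coupled MDP with N identical sub-MDPs (state type 's, action type 'a,
  both finite). Joint states / joint actions are lists of length N, positions 0..N-1.\<close>

definition joint_states :: "nat \<Rightarrow> 's list set" where
  "joint_states N = {xs. length xs = N}"

text \<open>Feasible joint actions: K resource constraints, consumption d k a, budgets b k.\<close>
definition joint_actions :: "nat \<Rightarrow> nat \<Rightarrow> (nat \<Rightarrow> 'a \<Rightarrow> real) \<Rightarrow> (nat \<Rightarrow> real) \<Rightarrow> 'a list set" where
  "joint_actions N K d b = {as. length as = N \<and> (\<forall>k<K. (\<Sum>n<N. d k (as ! n)) \<le> b k)}"

definition joint_trans :: "nat \<Rightarrow> ('s \<Rightarrow> 'a \<Rightarrow> 's \<Rightarrow> real) \<Rightarrow> 's list \<Rightarrow> 'a list \<Rightarrow> 's list \<Rightarrow> real" where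
  "joint_trans N p xs as ys = (\<Prod>n<N. p (xs ! n) (as ! n) (ys ! n))"

definition stationary_policy :: "nat \<Rightarrow> nat \<Rightarrow> (nat \<Rightarrow> 'a \<Rightarrow> real) \<Rightarrow> (nat \<Rightarrow> real)
    \<Rightarrow> ('s list \<Rightarrow> 'a list \<Rightarrow> real) \<Rightarrow> bool" where
  "stationary_policy N K d b \<pi> \<longleftrightarrow>
     (\<forall>xs \<in> joint_states N.
        (\<forall>as. 0 \<le> \<pi> xs as) \<and>
        (\<forall>as. as \<notin> joint_actions N K d b \<longrightarrow> \<pi> xs as = 0) \<and>
        (\<Sum>as \<in> joint_actions N K d b. \<pi> xs as) = 1)"

fun state_dist :: "nat \<Rightarrow> nat \<Rightarrow> (nat \<Rightarrow> 'a \<Rightarrow> real) \<Rightarrow> (nat \<Rightarrow> real) \<Rightarrow> ('s \<Rightarrow> 'a \<Rightarrow> 's \<Rightarrow> real)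
    \<Rightarrow> ('s list \<Rightarrow> real) \<Rightarrow> ('s list \<Rightarrow> 'a list \<Rightarrow> real) \<Rightarrow> nat \<Rightarrow> 's list \<Rightarrow> real" where
  "state_dist N K d b p mu \<pi> 0 ys = mu ys"
| "state_dist N K d b p mu \<pi> (Suc t) ys =
     (\<Sum>xs \<in> joint_states N. \<Sum>as \<in> joint_actions N K d b.
        state_dist N K d b p mu \<pi> t xs * \<pi> xs as * joint_trans N p xs as ys)"

text \<open>Component n of the value vector V_0^pi = E[sum_t gamma^t r(s_t,a_t)], written as
  the discounted sum of expected rewards of sub-MDP n at each time t.\<close>
definition value_vec :: "nat \<Rightarrow> nat \<Rightarrow> (nat \<Rightarrow> 'a \<Rightarrow> real) \<Rightarrow> (nat \<Rightarrow> real) \<Rightarrow> ('s \<Rightarrow> 'a \<Rightarrow> 's \<Rightarrow> real)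
    \<Rightarrow> ('s \<Rightarrow> 'a \<Rightarrow> real) \<Rightarrow> real \<Rightarrow> ('s list \<Rightarrow> real) \<Rightarrow> ('s list \<Rightarrow> 'a list \<Rightarrow> real) \<Rightarrow> nat \<Rightarrow> real" where
  "value_vec N K d b p r \<gamma> mu \<pi> n =
     (\<Sum>t. \<gamma> ^ t * (\<Sum>xs \<in> joint_states N. \<Sum>as \<in> joint_actions N K d b.
        state_dist N K d b p mu \<pi> t xs * \<pi> xs as * r (xs ! n) (as ! n)))"

definition perm_list :: "(nat \<Rightarrow> nat) \<Rightarrow> 'x list \<Rightarrow> 'x list" where
  "perm_list \<sigma> v = map (\<lambda>n. v ! \<sigma> n) [0..<length v]"

definition perm_invariant :: "nat \<Rightarrow> ('s list \<Rightarrow> 'a list \<Rightarrow> real) \<Rightarrow> bool" where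
  "perm_invariant N \<pi> \<longleftrightarrow>
     (\<forall>\<sigma>. \<sigma> permutes {..<N} \<longrightarrow>
        (\<forall>xs as. length xs = N \<longrightarrow> length as = N \<longrightarrow> \<pi> xs as = \<pi> (perm_list \<sigma> xs) (perm_list \<sigma> as)))"

definition GGF :: "nat \<Rightarrow> (nat \<Rightarrow> real) \<Rightarrow> (nat \<Rightarrow> real) \<Rightarrow> real" where
  "GGF N w v = Min {(\<Sum>n<N. w n * v (\<sigma> n)) | \<sigma>. \<sigma> permutes {..<N}}"

definition gini_weights :: "nat \<Rightarrow> (nat \<Rightarrow> real) \<Rightarrow> bool" where
  "gini_weights N w \<longleftrightarrow> (\<forall>n<N. 0 \<le> w n) \<and> (\<Sum>n<N. w n) = 1 \<and>
     (\<forall>i j. i \<le> j \<longrightarrow> j < N \<longrightarrow> w j \<le> w i)"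

definition opt_util_PI :: "nat \<Rightarrow> nat \<Rightarrow> (nat \<Rightarrow> 'a \<Rightarrow> real) \<Rightarrow> (nat \<Rightarrow> real) \<Rightarrow> ('s \<Rightarrow> 'a \<Rightarrow> 's \<Rightarrow> real)
    \<Rightarrow> ('s \<Rightarrow> 'a \<Rightarrow> real) \<Rightarrow> real \<Rightarrow> ('s list \<Rightarrow> real) \<Rightarrow> ('s list \<Rightarrow> 'a list \<Rightarrow> real) set" where
  "opt_util_PI N K d b p r \<gamma> mu =
     {\<pi>. stationary_policy N K d b \<pi> \<and> perm_invariant N \<pi> \<and>
          (\<forall>\<pi>'. stationary_policy N K d b \<pi>' \<longrightarrow>
             GGF N (\<lambda>_. 1 / real N) (value_vec N K d b p r \<gamma> mu \<pi>')
               \<le> GGF N (\<lambda>_. 1 / real N) (value_vec N K d b p r \<gamma> mu \<pi>))}"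

end

theory Submission
  imports Defs
begin


lemma perm_list_length[simp]: "length (perm_list \<sigma> v) = length v"
  by (simp add: perm_list_def)

lemma perm_list_nth[simp]: "n < length v \<Longrightarrow> perm_list \<sigma> v ! n = v ! \<sigma> n"
  by (simp add: perm_list_def)

lemma perm_list_comp:
  assumes "\<sigma> permutes {..<length v}"
  shows "perm_list \<sigma> (perm_list \<tau> v) = perm_list (\<tau> \<circ> \<sigma>) v"
proof (rule nth_equalityI)
  fix n assume "n < length (perm_list \<sigma> (perm_list \<tau> v))"
  then have n: "n < length v" by simp
  then have "\<sigma> n < length v" using permutes_in_image[OF assms] by simp
  then show "perm_list \<sigma> (perm_list \<tau> v) ! n = perm_list (\<tau> \<circ> \<sigma>) v ! n"
    using n by simp
qed simp

lemma perm_list_id[simp]: "perm_list id v = v"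
  by (simp add: perm_list_def map_nth)

lemma perm_list_inv1:
  assumes "\<sigma> permutes {..<length v}"
  shows "perm_list (inv \<sigma>) (perm_list \<sigma> v) = v"
  using perm_list_comp[OF permutes_inv[OF assms], of \<sigma>] permutes_inv_o(1)[OF assms] by simp

lemma perm_list_inv2:
  assumes "\<sigma> permutes {..<length v}"
  shows "perm_list \<sigma> (perm_list (inv \<sigma>) v) = v"
  using perm_list_comp[OF assms, of "inv \<sigma>"] permutes_inv_o(2)[OF assms] by simp

lemma joint_states_perm:
  assumes "\<sigma> permutes {..<N}"
  shows "bij_betw (perm_list \<sigma>) (joint_states N) (joint_states N)"
  by (rule bij_betw_byWitness[where f'="perm_list (inv \<sigma>)"])
     (use assms perm_list_inv1 perm_list_inv2 in \<open>auto simp: joint_states_def\<close>)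

lemma joint_actions_perm_iff:
  assumes "\<sigma> permutes {..<N}" "length as = N"
  shows "perm_list \<sigma> as \<in> joint_actions N K d b \<longleftrightarrow> as \<in> joint_actions N K d b"
proof -
  have "(\<Sum>n<N. d k (perm_list \<sigma> as ! n)) = (\<Sum>n<N. d k (as ! n))" for k
  proof -
    have "(\<Sum>n<N. d k (perm_list \<sigma> as ! n)) = (\<Sum>n<N. d k (as ! \<sigma> n))"
      using assms(2) by (intro sum.cong) auto
    also have "\<dots> = (\<Sum>n<N. d k (as ! n))"
      using sum.permute[OF assms(1), of "\<lambda>n. d k (as ! n)"] by (simp add: comp_def)
    finally show ?thesis .
  qed
  then show ?thesis using assms by (simp add: joint_actions_def)
qed

lemma joint_actions_perm:
  assumes "\<sigma> permutes {..<N}"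
  shows "bij_betw (perm_list \<sigma>) (joint_actions N K d b) (joint_actions N K d b)"
proof (rule bij_betw_byWitness[where f'="perm_list (inv \<sigma>)"])
  have i: "inv \<sigma> permutes {..<N}" using permutes_inv[OF assms] .
  show "\<forall>a\<in>joint_actions N K d b. perm_list (inv \<sigma>) (perm_list \<sigma> a) = a"
    using assms perm_list_inv1 by (auto simp: joint_actions_def)
  show "\<forall>a\<in>joint_actions N K d b. perm_list \<sigma> (perm_list (inv \<sigma>) a) = a"
    using assms perm_list_inv2 by (auto simp: joint_actions_def)
  have l: "a \<in> joint_actions N K d b \<Longrightarrow> length a = N" for a by (simp add: joint_actions_def)
  show "perm_list \<sigma> ` joint_actions N K d b \<subseteq> joint_actions N K d b"
    using joint_actions_perm_iff[OF assms] l by blast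
  show "perm_list (inv \<sigma>) ` joint_actions N K d b \<subseteq> joint_actions N K d b"
    using joint_actions_perm_iff[OF i] l by blast
qed

lemma joint_trans_perm:
  assumes "\<sigma> permutes {..<N}" "length xs = N" "length as = N" "length ys = N"
  shows "joint_trans N p (perm_list \<sigma> xs) (perm_list \<sigma> as) (perm_list \<sigma> ys) = joint_trans N p xs as ys"
proof -
  have "joint_trans N p (perm_list \<sigma> xs) (perm_list \<sigma> as) (perm_list \<sigma> ys)
      = (\<Prod>n<N. p (xs ! \<sigma> n) (as ! \<sigma> n) (ys ! \<sigma> n))"
    unfolding joint_trans_def using assms by (intro prod.cong) auto
  also have "\<dots> = joint_trans N p xs as ys"
    unfolding joint_trans_def
    using prod.permute[OF assms(1), of "\<lambda>n. p (xs ! n) (as ! n) (ys ! n)"] by (simp add: comp_def)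
  finally show ?thesis .
qed

lemma finite_joint_states[simp]: "finite (joint_states N :: ('s::finite) list set)"
  unfolding joint_states_def using finite_lists_length_eq[of "UNIV :: 's set" N] by simp

lemma finite_joint_actions[simp]: "finite (joint_actions N K d b :: ('a::finite) list set)"
  by (rule finite_subset[of _ "{xs. length xs = N}"])
     (use finite_lists_length_eq[of "UNIV :: 'a set" N] in \<open>auto simp: joint_actions_def\<close>)

lemma sum_lists_prod:
  fixes f :: "nat \<Rightarrow> 's::finite \<Rightarrow> real"
  shows "(\<Sum>ys\<in>{ys. length ys = n}. \<Prod>i<n. f i (ys ! i)) = (\<Prod>i<n. \<Sum>s\<in>UNIV. f i s)"
proof (induction n arbitrary: f)
  case 0
  then show ?case by simp
next
  case (Suc n)
  have e: "{ys. length ys = Suc n} = (\<lambda>(y, ys). y # ys) ` (UNIV \<times> {ys :: 's list. length ys = n})"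
    by (auto simp: image_iff length_Suc_conv)
  have inj: "inj_on (\<lambda>(y, ys). y # ys) (UNIV \<times> {ys :: 's list. length ys = n})"
    by (auto simp: inj_on_def)
  have "(\<Sum>ys\<in>{ys. length ys = Suc n}. \<Prod>i<Suc n. f i (ys ! i))
      = (\<Sum>(y, ys)\<in>UNIV \<times> {ys :: 's list. length ys = n}. f 0 y * (\<Prod>i<n. f (Suc i) (ys ! i)))"
    unfolding e by (subst sum.reindex[OF inj]) (simp only: prod.lessThan_Suc_shift, simp add: case_prod_beta)
  also have "\<dots> = (\<Sum>y\<in>UNIV. \<Sum>ys\<in>{ys :: 's list. length ys = n}. f 0 y * (\<Prod>i<n. f (Suc i) (ys ! i)))"
    by (rule sum.cartesian_product[symmetric])
  also have "\<dots> = (\<Sum>y\<in>UNIV. f 0 y) * (\<Prod>i<n. \<Sum>s\<in>UNIV. f (Suc i) s)"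
    by (simp add: sum_distrib_left[symmetric] sum_distrib_right Suc.IH[of "\<lambda>i. f (Suc i)"])
  also have "\<dots> = (\<Prod>i<Suc n. \<Sum>s\<in>UNIV. f i s)"
    by (simp only: prod.lessThan_Suc_shift)
  finally show ?case .
qed



locale wc =
  fixes N K :: nat
    and p :: "'s::finite \<Rightarrow> 'a::finite \<Rightarrow> 's \<Rightarrow> real"
    and r :: "'s \<Rightarrow> 'a \<Rightarrow> real"
    and d :: "nat \<Rightarrow> 'a \<Rightarrow> real" and b :: "nat \<Rightarrow> real"
    and \<gamma> :: real and mu :: "'s list \<Rightarrow> real"
  assumes p_nonneg: "\<And>s a s'. 0 \<le> p s a s'"
    and p_sum: "\<And>s a. (\<Sum>s'\<in>UNIV. p s a s') = 1"
    and gamma0: "0 \<le> \<gamma>" and gamma1: "\<gamma> < 1"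
    and mu_nonneg: "\<And>xs. xs \<in> joint_states N \<Longrightarrow> 0 \<le> mu xs"
    and mu_sum: "(\<Sum>xs \<in> joint_states N. mu xs) = 1"
    and mu_sym: "\<And>\<sigma> xs. \<sigma> permutes {..<N} \<Longrightarrow> xs \<in> joint_states N \<Longrightarrow> mu xs = mu (perm_list \<sigma> xs)"
begin

abbreviation "S \<equiv> joint_states N :: 's list set"
abbreviation "A \<equiv> joint_actions N K d b :: 'a list set"
abbreviation "T \<equiv> joint_trans N p"
abbreviation "sd \<equiv> state_dist N K d b p mu"
abbreviation "SP \<equiv> stationary_policy N K d b"

lemma T_nonneg: "0 \<le> T xs as ys"
  unfolding joint_trans_def by (intro prod_nonneg) (simp add: p_nonneg)

lemma T_sum: "(\<Sum>ys\<in>S. T xs as ys) = 1"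
  unfolding joint_trans_def joint_states_def
  using sum_lists_prod[of "\<lambda>i s. p (xs ! i) (as ! i) s" N] by (simp add: p_sum)

lemma SP_D: assumes "SP \<pi>" "xs \<in> S"
  shows "\<And>as. 0 \<le> \<pi> xs as" "\<And>as. as \<notin> A \<Longrightarrow> \<pi> xs as = 0" "(\<Sum>as\<in>A. \<pi> xs as) = 1"
  using assms unfolding stationary_policy_def by auto

lemma SP_le1: assumes "SP \<pi>" "xs \<in> S" shows "\<pi> xs as \<le> 1"
proof (cases "as \<in> A")
  case True
  then have "\<pi> xs as \<le> (\<Sum>as\<in>A. \<pi> xs as)"
    by (intro member_le_sum) (use SP_D[OF assms] in auto)
  then show ?thesis using SP_D[OF assms] by simp
qed (use SP_D[OF assms] in auto)

lemma sd_nonneg: assumes "SP \<pi>" "xs \<in> S" shows "0 \<le> sd \<pi> t xs"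
  using assms(2)
proof (induction t arbitrary: xs)
  case 0 then show ?case by (simp add: mu_nonneg)
next
  case (Suc t) then show ?case
    using SP_D[OF assms(1)] by (auto intro!: sum_nonneg mult_nonneg_nonneg T_nonneg)
qed

lemma sd_sum: assumes "SP \<pi>" shows "(\<Sum>xs\<in>S. sd \<pi> t xs) = 1"
proof (induction t)
  case 0 then show ?case by (simp add: mu_sum)
next
  case (Suc t)
  have "(\<Sum>ys\<in>S. sd \<pi> (Suc t) ys) = (\<Sum>ys\<in>S. \<Sum>xs\<in>S. \<Sum>as\<in>A. sd \<pi> t xs * \<pi> xs as * T xs as ys)"
    by simp
  also have "\<dots> = (\<Sum>xs\<in>S. \<Sum>as\<in>A. \<Sum>ys\<in>S. sd \<pi> t xs * \<pi> xs as * T xs as ys)"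
    by (subst sum.swap, rule sum.cong[OF refl], rule sum.swap)
  also have "\<dots> = (\<Sum>xs\<in>S. \<Sum>as\<in>A. sd \<pi> t xs * \<pi> xs as * (\<Sum>ys\<in>S. T xs as ys))"
    by (simp only: sum_distrib_left)
  also have "\<dots> = (\<Sum>xs\<in>S. sd \<pi> t xs * (\<Sum>as\<in>A. \<pi> xs as))"
    by (simp add: T_sum sum_distrib_left)
  also have "\<dots> = 1" using SP_D(3)[OF assms] Suc by simp
  finally show ?case .
qed

lemma sd_le1: assumes "SP \<pi>" "xs \<in> S" shows "sd \<pi> t xs \<le> 1"
proof -
  have "sd \<pi> t xs \<le> (\<Sum>xs\<in>S. sd \<pi> t xs)"
    by (intro member_le_sum) (use assms sd_nonneg in auto)
  then show ?thesis using sd_sum[OF assms(1)] by simp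
qed

definition D :: "('s list \<Rightarrow> 'a list \<Rightarrow> real) \<Rightarrow> 's list \<Rightarrow> real" where
  "D \<pi> xs = (\<Sum>t. \<gamma> ^ t * sd \<pi> t xs)"

lemma summable_geo: "summable (\<lambda>t. \<gamma> ^ t)"
  using gamma0 gamma1 by (simp add: summable_geometric)

lemma summable_sd: assumes "SP \<pi>" "xs \<in> S" shows "summable (\<lambda>t. \<gamma> ^ t * sd \<pi> t xs)"
proof (rule summable_comparison_test[OF _ summable_geo])
  show "\<exists>N. \<forall>n\<ge>N. norm (\<gamma> ^ n * sd \<pi> n xs) \<le> \<gamma> ^ n"
  proof (intro exI allI impI)
    fix n :: nat
    have g: "0 \<le> \<gamma> ^ n" using gamma0 by simp
    have "norm (\<gamma> ^ n * sd \<pi> n xs) = \<gamma> ^ n * sd \<pi> n xs"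
      using g sd_nonneg[OF assms, of n] by simp
    also have "\<dots> \<le> \<gamma> ^ n" using g sd_le1[OF assms, of n] by (rule mult_left_le[rotated])
    finally show "norm (\<gamma> ^ n * sd \<pi> n xs) \<le> \<gamma> ^ n" .
  qed
qed

lemma D_nonneg: assumes "SP \<pi>" "xs \<in> S" shows "0 \<le> D \<pi> xs"
  unfolding D_def
proof (rule suminf_nonneg[OF summable_sd[OF assms]])
  fix n show "0 \<le> \<gamma> ^ n * sd \<pi> n xs"
    using gamma0 sd_nonneg[OF assms, of n] by simp
qed

lemma D_le: assumes "SP \<pi>" "xs \<in> S" shows "D \<pi> xs \<le> 1 / (1 - \<gamma>)"
proof -
  have "D \<pi> xs \<le> (\<Sum>t. \<gamma> ^ t)"
    unfolding D_def
  proof (rule suminf_le[OF _ summable_sd[OF assms] summable_geo])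
    fix n
    have g: "0 \<le> \<gamma> ^ n" using gamma0 by simp
    show "\<gamma> ^ n * sd \<pi> n xs \<le> \<gamma> ^ n" using g sd_le1[OF assms, of n] by (rule mult_left_le[rotated])
  qed
  then show ?thesis using gamma0 gamma1 by (simp add: suminf_geometric)
qed

lemma suminf_sum2:
  fixes f :: "'i \<Rightarrow> 'j \<Rightarrow> nat \<Rightarrow> real"
  assumes "\<And>i j. i \<in> I \<Longrightarrow> j \<in> J \<Longrightarrow> summable (f i j)"
  shows "(\<Sum>n. \<Sum>i\<in>I. \<Sum>j\<in>J. f i j n) = (\<Sum>i\<in>I. \<Sum>j\<in>J. \<Sum>n. f i j n)"
proof -
  have "(\<Sum>n. \<Sum>i\<in>I. \<Sum>j\<in>J. f i j n) = (\<Sum>i\<in>I. \<Sum>n. \<Sum>j\<in>J. f i j n)"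
    by (rule suminf_sum) (rule summable_sum, rule assms)
  also have "\<dots> = (\<Sum>i\<in>I. \<Sum>j\<in>J. \<Sum>n. f i j n)"
    by (rule sum.cong[OF refl], rule suminf_sum, rule assms)
  finally show ?thesis .
qed

lemma D_swap:
  assumes "SP \<pi>"
  shows "(\<Sum>t. \<Sum>xs\<in>S. \<Sum>as\<in>A. \<gamma> ^ t * sd \<pi> t xs * g xs as) = (\<Sum>xs\<in>S. \<Sum>as\<in>A. D \<pi> xs * g xs as)"
proof -
  have sm: "summable (\<lambda>t. \<gamma> ^ t * sd \<pi> t xs * c)" if "xs \<in> S" for xs c
    using summable_mult2[OF summable_sd[OF assms that]] .
  have "(\<Sum>t. \<Sum>xs\<in>S. \<Sum>as\<in>A. \<gamma> ^ t * sd \<pi> t xs * g xs as)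
     = (\<Sum>xs\<in>S. \<Sum>as\<in>A. \<Sum>t. \<gamma> ^ t * sd \<pi> t xs * g xs as)"
    by (rule suminf_sum2) (rule sm)
  also have "\<dots> = (\<Sum>xs\<in>S. \<Sum>as\<in>A. D \<pi> xs * g xs as)"
  proof (intro sum.cong refl)
    fix xs as assume "xs \<in> S"
    show "(\<Sum>t. \<gamma> ^ t * sd \<pi> t xs * g xs as) = D \<pi> xs * g xs as"
      using suminf_mult2[OF summable_sd[OF assms \<open>xs \<in> S\<close>], of "g xs as"]
      by (simp add: D_def)
  qed
  finally show ?thesis .
qed

lemma D_flow: assumes "SP \<pi>" "ys \<in> S"
  shows "D \<pi> ys = mu ys + \<gamma> * (\<Sum>xs\<in>S. \<Sum>as\<in>A. D \<pi> xs * (\<pi> xs as * T xs as ys))"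
proof -
  let ?f = "\<lambda>t. \<Sum>xs\<in>S. \<Sum>as\<in>A. \<gamma> ^ t * sd \<pi> t xs * (\<pi> xs as * T xs as ys)"
  have sm: "summable ?f"
    by (intro summable_sum, rule summable_mult2, rule summable_sd[OF assms(1)], assumption)
  have h1: "D \<pi> ys = mu ys + (\<Sum>t. \<gamma> ^ Suc t * sd \<pi> (Suc t) ys)"
    unfolding D_def using suminf_split_head[OF summable_sd[OF assms]] by simp
  have h2: "(\<Sum>t. \<gamma> ^ Suc t * sd \<pi> (Suc t) ys) = (\<Sum>t. \<gamma> * ?f t)"
    by (rule arg_cong[where f=suminf], rule ext) (simp add: sum_distrib_left mult_ac)
  have h3: "(\<Sum>t. \<gamma> * ?f t) = \<gamma> * (\<Sum>t. ?f t)"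
    by (rule suminf_mult[OF sm])
  have h4: "(\<Sum>t. ?f t) = (\<Sum>xs\<in>S. \<Sum>as\<in>A. D \<pi> xs * (\<pi> xs as * T xs as ys))"
    by (rule D_swap[OF assms(1)])
  show ?thesis by (subst h1, subst h2, subst h3, subst h4, rule refl)
qed

lemma value_D: assumes "SP \<pi>"
  shows "value_vec N K d b p r \<gamma> mu \<pi> n = (\<Sum>xs\<in>S. \<Sum>as\<in>A. D \<pi> xs * (\<pi> xs as * r (xs ! n) (as ! n)))"
  unfolding value_vec_def D_swap[OF assms, symmetric]
  by (rule arg_cong[where f=suminf], rule ext) (simp add: sum_distrib_left mult_ac)

end


lemma GGF_set_finite: "finite {(\<Sum>n<(N::nat). w n * v (\<sigma> n)) | \<sigma>. \<sigma> permutes {..<N}}"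
proof -
  have "{(\<Sum>n<N. w n * v (\<sigma> n)) | \<sigma>. \<sigma> permutes {..<N}}
       = (\<lambda>\<sigma>. \<Sum>n<N. w n * v (\<sigma> n)) ` {\<sigma>. \<sigma> permutes {..<N}}" by blast
  then show ?thesis using finite_permutations[OF finite_lessThan[of N]] by simp
qed

lemma GGF_le: "\<sigma> permutes {..<N} \<Longrightarrow> GGF N w v \<le> (\<Sum>n<N. w n * v (\<sigma> n))"
  unfolding GGF_def by (rule Min_le[OF GGF_set_finite]) blast

lemma GGF_const_set:
  assumes "\<And>\<sigma>. \<sigma> permutes {..<N} \<Longrightarrow> (\<Sum>n<N. w n * v (\<sigma> n)) = c"
  shows "GGF N w v = c"
proof -
  have "{(\<Sum>n<N. w n * v (\<sigma> n)) | \<sigma>. \<sigma> permutes {..<N}} = {c}"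
    using assms permutes_id by blast
  then show ?thesis unfolding GGF_def by simp
qed

lemma GGF_util: "GGF N (\<lambda>_. 1 / real N) v = (\<Sum>n<N. v n) / real N"
proof (rule GGF_const_set)
  fix \<sigma> :: "nat \<Rightarrow> nat" assume s: "\<sigma> permutes {..<N}"
  have "(\<Sum>n<N. 1 / real N * v (\<sigma> n)) = (\<Sum>n<N. v (\<sigma> n)) / real N"
    by (simp add: sum_divide_distrib)
  also have "(\<Sum>n<N. v (\<sigma> n)) = (\<Sum>n<N. v n)"
    using sum.permute[OF s, of v] by (simp add: comp_def)
  finally show "(\<Sum>n<N. 1 / real N * v (\<sigma> n)) = (\<Sum>n<N. v n) / real N" .
qed

lemma GGF_const:
  assumes "\<And>n. n < N \<Longrightarrow> v n = c" "(\<Sum>n<N. w n) = 1"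
  shows "GGF N w v = c"
proof (rule GGF_const_set)
  fix \<sigma> :: "nat \<Rightarrow> nat" assume s: "\<sigma> permutes {..<N}"
  have "(\<Sum>n<N. w n * v (\<sigma> n)) = (\<Sum>n<N. w n * c)"
    using permutes_in_image[OF s] assms(1) by (intro sum.cong) auto
  also have "\<dots> = c" using assms(2) by (simp add: sum_distrib_right[symmetric])
  finally show "(\<Sum>n<N. w n * v (\<sigma> n)) = c" .
qed

lemma mod_aux: "(i::nat) < N \<Longrightarrow> j < N \<Longrightarrow> i \<le> j \<Longrightarrow> (i + k) mod N = (j + k) mod N \<Longrightarrow> i = j"
proof -
  assume a: "i < N" "j < N" "i \<le> j" "(i + k) mod N = (j + k) mod N"
  then have "N dvd (j + k) - (i + k)" using mod_eq_dvd_iff_nat[of "i+k" "j+k" N] by simp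
  then have "N dvd j - i" by simp
  then show "i = j" using a by (metis diff_less_mono dvd_imp_le le_antisym diff_is_0_eq' not_less zero_less_diff diff_le_self)
qed

definition cyc :: "nat \<Rightarrow> nat \<Rightarrow> nat \<Rightarrow> nat" where
  "cyc N k i = (if i < N then (i + k) mod N else i)"

lemma cyc_bij: "bij_betw (cyc N k) {..<N} {..<N}"
proof -
  have inj: "inj_on (cyc N k) {..<N}"
  proof (rule inj_onI)
    fix i j assume ij: "i \<in> {..<N}" "j \<in> {..<N}" "cyc N k i = cyc N k j"
    then have "(i + k) mod N = (j + k) mod N" by (simp add: cyc_def)
    then show "i = j" using ij mod_aux[of i N j k] mod_aux[of j N i k] by (cases "i \<le> j") auto
  qed
  have sub: "cyc N k ` {..<N} \<subseteq> {..<N}"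
    by (auto simp: cyc_def)
  show ?thesis using endo_inj_surj[OF _ sub inj] inj by (simp add: bij_betw_def)
qed

lemma cyc_permutes: "cyc N k permutes {..<N}"
  by (rule bij_imp_permutes[OF cyc_bij]) (simp add: cyc_def)

lemma cyc_sum: "n < N \<Longrightarrow> (\<Sum>k<N. v (cyc N k n)) = (\<Sum>m<N. v m)"
proof -
  assume n: "n < N"
  have "bij_betw (\<lambda>k. cyc N n k) {..<N} {..<N}" by (rule cyc_bij)
  moreover have "\<And>k. k < N \<Longrightarrow> cyc N k n = cyc N n k" using n by (simp add: cyc_def add.commute)
  ultimately show ?thesis
    using sum.reindex_bij_betw[of "\<lambda>k. cyc N n k" "{..<N}" "{..<N}" v] by simp
qed

lemma GGF_le_mean:
  assumes "(\<Sum>n<N. w n) = 1" "N \<ge> 1"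
  shows "GGF N w v \<le> (\<Sum>n<N. v n) / real N"
proof -
  have "real N * GGF N w v = (\<Sum>k<N. GGF N w v)" by simp
  also have "\<dots> \<le> (\<Sum>k<N. \<Sum>n<N. w n * v (cyc N k n))"
    by (intro sum_mono GGF_le cyc_permutes)
  also have "\<dots> = (\<Sum>n<N. w n * (\<Sum>k<N. v (cyc N k n)))"
    by (subst sum.swap) (simp add: sum_distrib_left)
  also have "\<dots> = (\<Sum>n<N. w n * (\<Sum>m<N. v m))"
    by (intro sum.cong refl) (simp add: cyc_sum)
  also have "\<dots> = (\<Sum>m<N. v m)" using assms(1) by (simp add: sum_distrib_right[symmetric])
  finally have "real N * GGF N w v \<le> (\<Sum>m<N. v m)" .
  then show ?thesis using assms(2) by (simp add: field_simps)
qed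



context wc begin

abbreviation "Perms \<equiv> {\<sigma>. \<sigma> permutes {..<N}}"

definition R :: "'s list \<Rightarrow> 'a list \<Rightarrow> real" where
  "R xs as = (\<Sum>n<N. r (xs ! n) (as ! n))"

lemma R_perm:
  assumes "\<sigma> permutes {..<N}" "length xs = N" "length as = N"
  shows "R (perm_list \<sigma> xs) (perm_list \<sigma> as) = R xs as"
proof -
  have "R (perm_list \<sigma> xs) (perm_list \<sigma> as) = (\<Sum>n<N. r (xs ! \<sigma> n) (as ! \<sigma> n))"
    unfolding R_def using assms by (intro sum.cong) auto
  also have "\<dots> = R xs as"
    unfolding R_def using sum.permute[OF assms(1), of "\<lambda>n. r (xs ! n) (as ! n)"] by (simp add: comp_def)
  finally show ?thesis .
qed

lemma reindex2:
  assumes "\<sigma> permutes {..<N}"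
  shows "(\<Sum>xs\<in>S. \<Sum>as\<in>A. f (perm_list \<sigma> xs) (perm_list \<sigma> as)) = (\<Sum>xs\<in>S. \<Sum>as\<in>A. f xs as)"
proof -
  have "(\<Sum>xs\<in>S. \<Sum>as\<in>A. f (perm_list \<sigma> xs) (perm_list \<sigma> as)) = (\<Sum>xs\<in>S. \<Sum>as\<in>A. f (perm_list \<sigma> xs) as)"
    by (intro sum.cong refl sum.reindex_bij_betw joint_actions_perm assms)
  also have "\<dots> = (\<Sum>xs\<in>S. \<Sum>as\<in>A. f xs as)"
    by (rule sum.reindex_bij_betw[OF joint_states_perm[OF assms], of "\<lambda>xs. \<Sum>as\<in>A. f xs as"])
  finally show ?thesis .
qed

lemma S_len: "xs \<in> S \<Longrightarrow> length xs = N" by (simp add: joint_states_def)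
lemma A_len: "as \<in> A \<Longrightarrow> length as = N" by (simp add: joint_actions_def)

definition U :: "('s list \<Rightarrow> 'a list \<Rightarrow> real) \<Rightarrow> real" where
  "U \<pi> = (\<Sum>n<N. value_vec N K d b p r \<gamma> mu \<pi> n)"

lemma U_D: assumes "SP \<pi>"
  shows "U \<pi> = (\<Sum>xs\<in>S. \<Sum>as\<in>A. D \<pi> xs * (\<pi> xs as * R xs as))"
proof -
  have "U \<pi> = (\<Sum>n<N. \<Sum>xs\<in>S. \<Sum>as\<in>A. D \<pi> xs * (\<pi> xs as * r (xs ! n) (as ! n)))"
    unfolding U_def by (rule sum.cong[OF refl], rule value_D[OF assms])
  also have "\<dots> = (\<Sum>xs\<in>S. \<Sum>n<N. \<Sum>as\<in>A. D \<pi> xs * (\<pi> xs as * r (xs ! n) (as ! n)))"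
    by (rule sum.swap)
  also have "\<dots> = (\<Sum>xs\<in>S. \<Sum>as\<in>A. \<Sum>n<N. D \<pi> xs * (\<pi> xs as * r (xs ! n) (as ! n)))"
    by (intro sum.cong refl sum.swap)
  also have "\<dots> = (\<Sum>xs\<in>S. \<Sum>as\<in>A. D \<pi> xs * (\<pi> xs as * R xs as))"
    unfolding R_def by (simp only: sum_distrib_left)
  finally show ?thesis .
qed

definition cc :: real where "cc = 1 / (1 - \<gamma>)"

definition box :: "'s list \<times> 'a list \<Rightarrow> real set" where
  "box i = (if i \<in> S \<times> A then {0..cc} else {0})"

definition flow :: "('s list \<times> 'a list \<Rightarrow> real) \<Rightarrow> bool" where
  "flow x \<longleftrightarrow> (\<forall>ys\<in>S. (\<Sum>as\<in>A. x (ys, as)) = mu ys + \<gamma> * (\<Sum>xs\<in>S. \<Sum>as\<in>A. x (xs, as) * T xs as ys))"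

definition P :: "('s list \<times> 'a list \<Rightarrow> real) set" where
  "P = {x. (\<forall>i. x i \<in> box i) \<and> flow x}"

definition F :: "('s list \<times> 'a list \<Rightarrow> real) \<Rightarrow> real" where
  "F x = (\<Sum>xs\<in>S. \<Sum>as\<in>A. x (xs, as) * R xs as)"

definition occ :: "('s list \<Rightarrow> 'a list \<Rightarrow> real) \<Rightarrow> 's list \<times> 'a list \<Rightarrow> real" where
  "occ \<pi> i = (if i \<in> S \<times> A then D \<pi> (fst i) * \<pi> (fst i) (snd i) else 0)"

lemma occ_P: assumes "SP \<pi>" shows "occ \<pi> \<in> P"
proof -
  have "occ \<pi> i \<in> box i" for i
  proof (cases "i \<in> S \<times> A")
    case True
    then obtain xs as where i: "i = (xs, as)" "xs \<in> S" "as \<in> A" by auto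
    have d0: "0 \<le> D \<pi> xs" by (rule D_nonneg[OF assms i(2)])
    have p0: "0 \<le> \<pi> xs as" by (rule SP_D(1)[OF assms i(2)])
    have "D \<pi> xs * \<pi> xs as \<le> D \<pi> xs" by (rule mult_left_le[OF SP_le1[OF assms i(2)] d0])
    also have "\<dots> \<le> cc" unfolding cc_def by (rule D_le[OF assms i(2)])
    finally show ?thesis using True i d0 p0 by (simp add: occ_def box_def)
  qed (simp add: occ_def box_def)
  moreover have "flow (occ \<pi>)"
    unfolding flow_def
  proof
    fix ys assume ys: "ys \<in> S"
    have "(\<Sum>as\<in>A. occ \<pi> (ys, as)) = D \<pi> ys * (\<Sum>as\<in>A. \<pi> ys as)"
      using ys by (simp add: occ_def sum_distrib_left)
    also have "\<dots> = D \<pi> ys" using SP_D(3)[OF assms ys] by simp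
    also have "\<dots> = mu ys + \<gamma> * (\<Sum>xs\<in>S. \<Sum>as\<in>A. D \<pi> xs * (\<pi> xs as * T xs as ys))"
      by (rule D_flow[OF assms ys])
    also have "(\<Sum>xs\<in>S. \<Sum>as\<in>A. D \<pi> xs * (\<pi> xs as * T xs as ys))
        = (\<Sum>xs\<in>S. \<Sum>as\<in>A. occ \<pi> (xs, as) * T xs as ys)"
      by (intro sum.cong refl) (simp add: occ_def)
    finally show "(\<Sum>as\<in>A. occ \<pi> (ys, as)) = mu ys + \<gamma> * (\<Sum>xs\<in>S. \<Sum>as\<in>A. occ \<pi> (xs, as) * T xs as ys)" .
  qed
  ultimately show ?thesis unfolding P_def by blast
qed

lemma F_occ: assumes "SP \<pi>" shows "F (occ \<pi>) = U \<pi>"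
  unfolding F_def U_D[OF assms] by (intro sum.cong refl) (simp add: occ_def)

lemma compact_P: "compact P"
proof -
  have c1: "compact (Pi\<^sub>E UNIV box)"
  proof -
    have "compact (box i)" for i by (simp add: box_def)
    then show ?thesis using compactin_PiE[of "\<lambda>_. euclidean" UNIV box]
      by (simp add: euclidean_product_topology compactin_euclidean_iff)
  qed
  have cont: "continuous_on UNIV (\<lambda>x :: 's list \<times> 'a list \<Rightarrow> real. x i)" for i
    by (rule continuous_on_product_coordinates)
  have c2: "closed {x. flow x}"
  proof -
    have "{x. flow x} = (\<Inter>ys\<in>S. {x. (\<Sum>as\<in>A. x (ys, as)) = mu ys + \<gamma> * (\<Sum>xs\<in>S. \<Sum>as\<in>A. x (xs, as) * T xs as ys)})"
      unfolding flow_def by blast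
    also have "closed \<dots>"
      by (intro closed_INT ballI closed_Collect_eq continuous_intros cont)
    finally show ?thesis .
  qed
  have "P = Pi\<^sub>E UNIV box \<inter> {x. flow x}"
    unfolding P_def by (auto simp: PiE_iff)
  then show ?thesis using compact_Int_closed[OF c1 c2] by simp
qed

lemma continuous_F: "continuous_on P F"
proof -
  have cont: "continuous_on UNIV (\<lambda>x :: 's list \<times> 'a list \<Rightarrow> real. x i)" for i
    by (rule continuous_on_product_coordinates)
  have "continuous_on UNIV F" unfolding F_def
    by (intro continuous_intros cont)
  then show ?thesis by (rule continuous_on_subset) simp
qed

end


context wc begin

lemma P_in: "x \<in> P \<Longrightarrow> i \<in> S \<times> A \<Longrightarrow> 0 \<le> x i \<and> x i \<le> cc"
  unfolding P_def box_def by (metis (no_types, lifting) atLeastAtMost_iff mem_Collect_eq)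

lemma P_out: "x \<in> P \<Longrightarrow> i \<notin> S \<times> A \<Longrightarrow> x i = 0"
  unfolding P_def box_def by (metis (no_types, lifting) mem_Collect_eq singletonD)

lemma P_flow: "x \<in> P \<Longrightarrow> ys \<in> S \<Longrightarrow> (\<Sum>as\<in>A. x (ys, as)) = mu ys + \<gamma> * (\<Sum>xs\<in>S. \<Sum>as\<in>A. x (xs, as) * T xs as ys)"
  unfolding P_def flow_def by blast

lemma cc_nonneg: "0 \<le> cc" using gamma1 by (simp add: cc_def)

lemma card_Perms: "card Perms = fact N"
  using card_permutations[of "{..<N}" N] by simp

lemma card_Perms_pos: "0 < real (card Perms)"
  by (simp add: card_Perms)

lemma finite_Perms: "finite Perms"
  by (rule finite_permutations) simp

lemma perm_in_SA:
  assumes "\<sigma> permutes {..<N}"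
  shows "(perm_list \<sigma> xs, perm_list \<sigma> as) \<in> S \<times> A \<longleftrightarrow> (xs, as) \<in> S \<times> A"
proof (cases "length as = N")
  case True
  then show ?thesis using joint_actions_perm_iff[OF assms True] by (simp add: joint_states_def)
next
  case False
  then show ?thesis by (simp add: joint_states_def joint_actions_def)
qed

definition xbar :: "('s list \<times> 'a list \<Rightarrow> real) \<Rightarrow> 's list \<times> 'a list \<Rightarrow> real" where
  "xbar x i = (\<Sum>\<sigma>\<in>Perms. x (perm_list \<sigma> (fst i), perm_list \<sigma> (snd i))) / real (card Perms)"

lemma xbar_box: assumes "x \<in> P" shows "xbar x i \<in> box i"
proof (cases "i \<in> S \<times> A")
  case True
  obtain xs as where i: "i = (xs, as)" by force
  have t: "(perm_list \<sigma> xs, perm_list \<sigma> as) \<in> S \<times> A" if "\<sigma> \<in> Perms" for \<sigma>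
    using perm_in_SA[of \<sigma> xs as] that True i by simp
  have "0 \<le> (\<Sum>\<sigma>\<in>Perms. x (perm_list \<sigma> xs, perm_list \<sigma> as))"
    by (intro sum_nonneg) (use P_in[OF assms t] in blast)
  moreover have "(\<Sum>\<sigma>\<in>Perms. x (perm_list \<sigma> xs, perm_list \<sigma> as)) \<le> real (card Perms) * cc"
    by (intro sum_bounded_above) (use P_in[OF assms t] in blast)
  ultimately show ?thesis using True i card_Perms_pos
    by (simp add: xbar_def box_def field_simps)
next
  case False
  obtain xs as where i: "i = (xs, as)" by force
  have "x (perm_list \<sigma> xs, perm_list \<sigma> as) = 0" if "\<sigma> \<in> Perms" for \<sigma>
    using perm_in_SA[of \<sigma> xs as] that False i P_out[OF assms] by simp
  then show ?thesis using False i cc_nonneg by (simp add: xbar_def box_def)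
qed

lemma xbar_sym:
  assumes "\<tau> permutes {..<N}" "length xs = N" "length as = N"
  shows "xbar x (perm_list \<tau> xs, perm_list \<tau> as) = xbar x (xs, as)"
proof -
  have bij: "bij_betw (\<lambda>\<sigma>. \<tau> \<circ> \<sigma>) Perms Perms"
  proof (rule bij_betw_byWitness[where f'="\<lambda>\<sigma>. inv \<tau> \<circ> \<sigma>"])
    show "\<forall>a\<in>Perms. inv \<tau> \<circ> (\<tau> \<circ> a) = a"
      using permutes_inv_o(2)[OF assms(1)] by (simp add: o_assoc)
    show "\<forall>a\<in>Perms. \<tau> \<circ> (inv \<tau> \<circ> a) = a"
      using permutes_inv_o(1)[OF assms(1)] by (simp add: o_assoc)
    show "(\<circ>) \<tau> ` Perms \<subseteq> Perms" using permutes_compose[OF _ assms(1)] by blast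
    show "(\<circ>) (inv \<tau>) ` Perms \<subseteq> Perms" using permutes_compose[OF _ permutes_inv[OF assms(1)]] by blast
  qed
  have "(\<Sum>\<sigma>\<in>Perms. x (perm_list \<sigma> (perm_list \<tau> xs), perm_list \<sigma> (perm_list \<tau> as)))
      = (\<Sum>\<sigma>\<in>Perms. x (perm_list (\<tau> \<circ> \<sigma>) xs, perm_list (\<tau> \<circ> \<sigma>) as))"
    using assms by (intro sum.cong refl) (simp add: perm_list_comp)
  also have "\<dots> = (\<Sum>\<sigma>\<in>Perms. x (perm_list \<sigma> xs, perm_list \<sigma> as))"
    by (rule sum.reindex_bij_betw[OF bij, of "\<lambda>\<sigma>. x (perm_list \<sigma> xs, perm_list \<sigma> as)"])
  finally show ?thesis by (simp add: xbar_def)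
qed

lemma xbar_flow: assumes "x \<in> P" shows "flow (xbar x)"
  unfolding flow_def
proof
  fix ys assume ys: "ys \<in> S"
  let ?c = "real (card Perms)"
  define G where "G \<sigma> = (\<Sum>xs\<in>S. \<Sum>as\<in>A. x (xs, as) * T xs as (perm_list \<sigma> ys))" for \<sigma>
  have pys: "perm_list \<sigma> ys \<in> S" if "\<sigma> \<in> Perms" for \<sigma>
    using ys that by (simp add: joint_states_def)
  have "(\<Sum>as\<in>A. xbar x (ys, as)) = (\<Sum>as\<in>A. \<Sum>\<sigma>\<in>Perms. x (perm_list \<sigma> ys, perm_list \<sigma> as)) / ?c"
    by (simp add: xbar_def sum_divide_distrib)
  also have "(\<Sum>as\<in>A. \<Sum>\<sigma>\<in>Perms. x (perm_list \<sigma> ys, perm_list \<sigma> as))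
      = (\<Sum>\<sigma>\<in>Perms. \<Sum>as\<in>A. x (perm_list \<sigma> ys, perm_list \<sigma> as))"
    by (rule sum.swap)
  also have "\<dots> = (\<Sum>\<sigma>\<in>Perms. \<Sum>as\<in>A. x (perm_list \<sigma> ys, as))"
  proof (rule sum.cong[OF refl])
    fix \<sigma> assume s: "\<sigma> \<in> Perms"
    show "(\<Sum>as\<in>A. x (perm_list \<sigma> ys, perm_list \<sigma> as)) = (\<Sum>as\<in>A. x (perm_list \<sigma> ys, as))"
      using sum.reindex_bij_betw[OF joint_actions_perm[of \<sigma> N K d b], where g="\<lambda>as. x (perm_list \<sigma> ys, as)"] s
      by simp
  qed
  also have "\<dots> = (\<Sum>\<sigma>\<in>Perms. mu ys + \<gamma> * G \<sigma>)"
  proof (intro sum.cong refl)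
    fix \<sigma> assume s: "\<sigma> \<in> Perms"
    show "(\<Sum>as\<in>A. x (perm_list \<sigma> ys, as)) = mu ys + \<gamma> * G \<sigma>"
      unfolding G_def P_flow[OF assms pys[OF s]] using mu_sym[of \<sigma> ys] s ys by simp
  qed
  finally have L: "(\<Sum>as\<in>A. xbar x (ys, as)) = (\<Sum>\<sigma>\<in>Perms. mu ys + \<gamma> * G \<sigma>) / ?c" .
  have "(\<Sum>xs\<in>S. \<Sum>as\<in>A. xbar x (xs, as) * T xs as ys)
      = (\<Sum>xs\<in>S. \<Sum>as\<in>A. \<Sum>\<sigma>\<in>Perms. x (perm_list \<sigma> xs, perm_list \<sigma> as) * T xs as ys) / ?c"
    by (simp add: xbar_def sum_divide_distrib sum_distrib_right)
  also have "(\<Sum>xs\<in>S. \<Sum>as\<in>A. \<Sum>\<sigma>\<in>Perms. x (perm_list \<sigma> xs, perm_list \<sigma> as) * T xs as ys)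
      = (\<Sum>\<sigma>\<in>Perms. \<Sum>xs\<in>S. \<Sum>as\<in>A. x (perm_list \<sigma> xs, perm_list \<sigma> as) * T xs as ys)"
    by (subst sum.swap, rule sum.cong[OF refl], rule sum.swap)
  also have "\<dots> = (\<Sum>\<sigma>\<in>Perms. G \<sigma>)"
  proof (intro sum.cong refl)
    fix \<sigma> assume s: "\<sigma> \<in> Perms"
    have "(\<Sum>xs\<in>S. \<Sum>as\<in>A. x (perm_list \<sigma> xs, perm_list \<sigma> as) * T xs as ys)
       = (\<Sum>xs\<in>S. \<Sum>as\<in>A. x (perm_list \<sigma> xs, perm_list \<sigma> as) * T (perm_list \<sigma> xs) (perm_list \<sigma> as) (perm_list \<sigma> ys))"
      using s ys by (intro sum.cong refl) (simp add: joint_trans_perm S_len A_len)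
    also have "\<dots> = G \<sigma>" unfolding G_def
      by (rule reindex2[of \<sigma> "\<lambda>xs as. x (xs, as) * T xs as (perm_list \<sigma> ys)"]) (use s in simp)
    finally show "(\<Sum>xs\<in>S. \<Sum>as\<in>A. x (perm_list \<sigma> xs, perm_list \<sigma> as) * T xs as ys) = G \<sigma>" .
  qed
  finally have Rr: "(\<Sum>xs\<in>S. \<Sum>as\<in>A. xbar x (xs, as) * T xs as ys) = (\<Sum>\<sigma>\<in>Perms. G \<sigma>) / ?c" .
  have "(\<Sum>\<sigma>\<in>Perms. mu ys + \<gamma> * G \<sigma>) / ?c = mu ys + \<gamma> * ((\<Sum>\<sigma>\<in>Perms. G \<sigma>) / ?c)"
    using card_Perms_pos by (simp add: sum.distrib sum_distrib_left[symmetric] field_simps)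
  then show "(\<Sum>as\<in>A. xbar x (ys, as)) = mu ys + \<gamma> * (\<Sum>xs\<in>S. \<Sum>as\<in>A. xbar x (xs, as) * T xs as ys)"
    using L Rr by simp
qed

lemma xbar_P: "x \<in> P \<Longrightarrow> xbar x \<in> P"
  using xbar_box xbar_flow unfolding P_def by blast

lemma F_xbar: assumes "x \<in> P" shows "F (xbar x) = F x"
proof -
  let ?c = "real (card Perms)"
  have "F (xbar x) = (\<Sum>xs\<in>S. \<Sum>as\<in>A. \<Sum>\<sigma>\<in>Perms. x (perm_list \<sigma> xs, perm_list \<sigma> as) * R xs as) / ?c"
    by (simp add: F_def xbar_def sum_divide_distrib sum_distrib_right)
  also have "(\<Sum>xs\<in>S. \<Sum>as\<in>A. \<Sum>\<sigma>\<in>Perms. x (perm_list \<sigma> xs, perm_list \<sigma> as) * R xs as)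
      = (\<Sum>\<sigma>\<in>Perms. \<Sum>xs\<in>S. \<Sum>as\<in>A. x (perm_list \<sigma> xs, perm_list \<sigma> as) * R xs as)"
    by (subst sum.swap, rule sum.cong[OF refl], rule sum.swap)
  also have "\<dots> = (\<Sum>\<sigma>\<in>Perms. F x)"
  proof (intro sum.cong refl)
    fix \<sigma> assume s: "\<sigma> \<in> Perms"
    have "(\<Sum>xs\<in>S. \<Sum>as\<in>A. x (perm_list \<sigma> xs, perm_list \<sigma> as) * R xs as)
       = (\<Sum>xs\<in>S. \<Sum>as\<in>A. x (perm_list \<sigma> xs, perm_list \<sigma> as) * R (perm_list \<sigma> xs) (perm_list \<sigma> as))"
      using s by (intro sum.cong refl) (simp add: R_perm S_len A_len)
    also have "\<dots> = F x" unfolding F_def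
      by (rule reindex2[of \<sigma> "\<lambda>xs as. x (xs, as) * R xs as"]) (use s in simp)
    finally show "(\<Sum>xs\<in>S. \<Sum>as\<in>A. x (perm_list \<sigma> xs, perm_list \<sigma> as) * R xs as) = F x" .
  qed
  finally show ?thesis using card_Perms_pos by simp
qed

end


context wc begin

lemma uniq:
  assumes sp: "SP \<pi>"
    and e: "\<And>ys. ys \<in> S \<Longrightarrow> e ys = \<gamma> * (\<Sum>xs\<in>S. \<Sum>as\<in>A. e xs * (\<pi> xs as * T xs as ys))"
    and ys: "ys \<in> S"
  shows "e ys = 0"
proof -
  have pT: "0 \<le> \<pi> xs as * T xs as ys" if "xs \<in> S" for xs as ys
    using SP_D(1)[OF sp that] T_nonneg by simp
  have bound: "\<bar>e ys\<bar> \<le> \<gamma> * (\<Sum>xs\<in>S. \<Sum>as\<in>A. \<bar>e xs\<bar> * (\<pi> xs as * T xs as ys))" if ys: "ys \<in> S" for ys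
  proof -
    have "\<bar>e ys\<bar> = \<gamma> * \<bar>\<Sum>xs\<in>S. \<Sum>as\<in>A. e xs * (\<pi> xs as * T xs as ys)\<bar>"
      using e[OF ys] gamma0 by (simp add: abs_mult)
    also have "\<bar>\<Sum>xs\<in>S. \<Sum>as\<in>A. e xs * (\<pi> xs as * T xs as ys)\<bar>
       \<le> (\<Sum>xs\<in>S. \<Sum>as\<in>A. \<bar>e xs * (\<pi> xs as * T xs as ys)\<bar>)"
      by (rule order_trans[OF sum_abs sum_mono[OF sum_abs]])
    also have "\<dots> = (\<Sum>xs\<in>S. \<Sum>as\<in>A. \<bar>e xs\<bar> * (\<pi> xs as * T xs as ys))"
    proof (intro sum.cong refl)
      fix xs as assume xs: "xs \<in> S"
      show "\<bar>e xs * (\<pi> xs as * T xs as ys)\<bar> = \<bar>e xs\<bar> * (\<pi> xs as * T xs as ys)"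
        by (simp add: abs_mult abs_of_nonneg[OF SP_D(1)[OF sp xs]] abs_of_nonneg[OF T_nonneg])
    qed
    finally show ?thesis using gamma0 by (simp add: mult_left_mono)
  qed
  have "(\<Sum>ys\<in>S. \<Sum>xs\<in>S. \<Sum>as\<in>A. \<bar>e xs\<bar> * (\<pi> xs as * T xs as ys))
      = (\<Sum>xs\<in>S. \<Sum>as\<in>A. \<Sum>ys\<in>S. \<bar>e xs\<bar> * (\<pi> xs as * T xs as ys))"
    by (subst sum.swap, rule sum.cong[OF refl], rule sum.swap)
  also have "\<dots> = (\<Sum>xs\<in>S. \<bar>e xs\<bar> * (\<Sum>as\<in>A. \<pi> xs as))"
    by (simp add: sum_distrib_left[symmetric] T_sum)
  also have "\<dots> = (\<Sum>xs\<in>S. \<bar>e xs\<bar>)"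
    by (intro sum.cong refl) (simp add: SP_D(3)[OF sp])
  finally have sw: "(\<Sum>ys\<in>S. \<Sum>xs\<in>S. \<Sum>as\<in>A. \<bar>e xs\<bar> * (\<pi> xs as * T xs as ys)) = (\<Sum>xs\<in>S. \<bar>e xs\<bar>)" .
  have "(\<Sum>ys\<in>S. \<bar>e ys\<bar>) \<le> (\<Sum>ys\<in>S. \<gamma> * (\<Sum>xs\<in>S. \<Sum>as\<in>A. \<bar>e xs\<bar> * (\<pi> xs as * T xs as ys)))"
    by (intro sum_mono bound)
  also have "\<dots> = \<gamma> * (\<Sum>ys\<in>S. \<Sum>xs\<in>S. \<Sum>as\<in>A. \<bar>e xs\<bar> * (\<pi> xs as * T xs as ys))"
    by (rule sum_distrib_left[symmetric])
  also have "\<dots> = \<gamma> * (\<Sum>xs\<in>S. \<bar>e xs\<bar>)"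
    by (rule arg_cong[OF sw])
  finally have le: "(\<Sum>ys\<in>S. \<bar>e ys\<bar>) \<le> \<gamma> * (\<Sum>xs\<in>S. \<bar>e xs\<bar>)" .
  have nn: "0 \<le> (\<Sum>ys\<in>S. \<bar>e ys\<bar>)" by (simp add: sum_nonneg)
  have z: "(\<Sum>ys\<in>S. \<bar>e ys\<bar>) = 0"
  proof (rule ccontr)
    assume "(\<Sum>ys\<in>S. \<bar>e ys\<bar>) \<noteq> 0"
    then have "0 < (\<Sum>ys\<in>S. \<bar>e ys\<bar>)" using nn by linarith
    then have "\<gamma> * (\<Sum>xs\<in>S. \<bar>e xs\<bar>) < (\<Sum>ys\<in>S. \<bar>e ys\<bar>)" using gamma1 by simp
    then show False using le by simp
  qed
  have "\<bar>e ys\<bar> = 0" using z sum_nonneg_eq_0_iff[of S "\<lambda>ys. \<bar>e ys\<bar>"] ys by simp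
  then show ?thesis by simp
qed

definition dx :: "('s list \<times> 'a list \<Rightarrow> real) \<Rightarrow> 's list \<Rightarrow> real" where
  "dx x xs = (\<Sum>as\<in>A. x (xs, as))"

definition pol :: "('s list \<times> 'a list \<Rightarrow> real) \<Rightarrow> 's list \<Rightarrow> 'a list \<Rightarrow> real" where
  "pol x xs as = (if as \<in> A then (if dx x xs = 0 then 1 / real (card A) else x (xs, as) / dx x xs) else 0)"

lemma dx_nonneg: "x \<in> P \<Longrightarrow> xs \<in> S \<Longrightarrow> 0 \<le> dx x xs"
  unfolding dx_def by (intro sum_nonneg) (use P_in in blast)

lemma x_le_dx: "x \<in> P \<Longrightarrow> xs \<in> S \<Longrightarrow> as \<in> A \<Longrightarrow> x (xs, as) \<le> dx x xs"
  unfolding dx_def by (rule member_le_sum[of as A "\<lambda>as. x (xs, as)"]) (use P_in in auto)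

lemma x_eq: assumes "x \<in> P" "xs \<in> S" "as \<in> A" shows "x (xs, as) = dx x xs * pol x xs as"
proof (cases "dx x xs = 0")
  case True
  then have "x (xs, as) = 0" using x_le_dx[OF assms] P_in[OF assms(1), of "(xs, as)"] assms by simp
  then show ?thesis using True by (simp add: pol_def)
qed (simp add: pol_def assms)

lemma pol_SP: assumes "x \<in> P" "A \<noteq> {}" shows "SP (pol x)"
  unfolding stationary_policy_def
proof (intro ballI conjI allI impI)
  fix xs as assume xs: "xs \<in> S"
  show "0 \<le> pol x xs as"
    using dx_nonneg[OF assms(1) xs] P_in[OF assms(1), of "(xs, as)"] xs by (simp add: pol_def)
next
  fix xs as assume "xs \<in> S" "as \<notin> A" then show "pol x xs as = 0" by (simp add: pol_def)
next
  fix xs assume xs: "xs \<in> S"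
  have cA: "0 < card A" using assms(2) by (simp add: card_gt_0_iff)
  show "(\<Sum>as\<in>A. pol x xs as) = 1"
  proof (cases "dx x xs = 0")
    case True
    then show ?thesis using cA assms(2) by (simp add: pol_def)
  next
    case False
    have "(\<Sum>as\<in>A. pol x xs as) = (\<Sum>as\<in>A. x (xs, as)) / dx x xs"
      using False by (simp add: pol_def sum_divide_distrib)
    then show ?thesis using False by (simp add: dx_def)
  qed
qed

definition symx :: "('s list \<times> 'a list \<Rightarrow> real) \<Rightarrow> bool" where
  "symx x \<longleftrightarrow> (\<forall>\<tau>. \<tau> permutes {..<N} \<longrightarrow> (\<forall>xs as. length xs = N \<longrightarrow> length as = N \<longrightarrow>
      x (perm_list \<tau> xs, perm_list \<tau> as) = x (xs, as)))"

lemma pol_PI: assumes "symx x" shows "perm_invariant N (pol x)"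
  unfolding perm_invariant_def
proof (intro allI impI)
  fix \<tau> and xs :: "'s list" and as :: "'a list"
  assume t: "\<tau> permutes {..<N}" and l: "length xs = N" "length as = N"
  have dxe: "dx x (perm_list \<tau> xs) = dx x xs"
  proof -
    have "dx x (perm_list \<tau> xs) = (\<Sum>as\<in>A. x (perm_list \<tau> xs, perm_list \<tau> as))"
      unfolding dx_def
      using sum.reindex_bij_betw[OF joint_actions_perm[of \<tau> N K d b], where g="\<lambda>as. x (perm_list \<tau> xs, as)"] t
      by simp
    also have "\<dots> = dx x xs" unfolding dx_def
      using assms t l by (intro sum.cong refl) (simp add: symx_def A_len)
    finally show ?thesis .
  qed
  have xe: "x (perm_list \<tau> xs, perm_list \<tau> as) = x (xs, as)" using assms t l by (simp add: symx_def)
  show "pol x xs as = pol x (perm_list \<tau> xs) (perm_list \<tau> as)"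
    unfolding pol_def dxe xe using joint_actions_perm_iff[OF t l(2)] by simp
qed

lemma D_pol: assumes "x \<in> P" "A \<noteq> {}" "ys \<in> S" shows "D (pol x) ys = dx x ys"
proof -
  have sp: "SP (pol x)" by (rule pol_SP[OF assms(1,2)])
  have fl: "dx x ys = mu ys + \<gamma> * (\<Sum>xs\<in>S. \<Sum>as\<in>A. dx x xs * (pol x xs as * T xs as ys))"
    if ys: "ys \<in> S" for ys
  proof -
    have "dx x ys = mu ys + \<gamma> * (\<Sum>xs\<in>S. \<Sum>as\<in>A. x (xs, as) * T xs as ys)"
      unfolding dx_def by (rule P_flow[OF assms(1) ys])
    also have "(\<Sum>xs\<in>S. \<Sum>as\<in>A. x (xs, as) * T xs as ys) = (\<Sum>xs\<in>S. \<Sum>as\<in>A. dx x xs * (pol x xs as * T xs as ys))"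
      using x_eq[OF assms(1)] by (intro sum.cong refl) simp
    finally show ?thesis .
  qed
  let ?e = "\<lambda>ys. dx x ys - D (pol x) ys"
  have "?e ys = 0"
  proof (rule uniq[OF sp _ assms(3)])
    fix ys assume ys: "ys \<in> S"
    have "?e ys = \<gamma> * (\<Sum>xs\<in>S. \<Sum>as\<in>A. dx x xs * (pol x xs as * T xs as ys))
       - \<gamma> * (\<Sum>xs\<in>S. \<Sum>as\<in>A. D (pol x) xs * (pol x xs as * T xs as ys))"
      using fl[OF ys] D_flow[OF sp ys] by simp
    also have "\<dots> = \<gamma> * (\<Sum>xs\<in>S. \<Sum>as\<in>A. ?e xs * (pol x xs as * T xs as ys))"
      by (simp add: right_diff_distrib[symmetric] sum_subtractf[symmetric] left_diff_distrib)
    finally show "?e ys = \<gamma> * (\<Sum>xs\<in>S. \<Sum>as\<in>A. ?e xs * (pol x xs as * T xs as ys))" .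
  qed
  then show ?thesis by simp
qed

lemma U_pol: assumes "x \<in> P" "A \<noteq> {}" shows "U (pol x) = F x"
proof -
  have sp: "SP (pol x)" by (rule pol_SP[OF assms(1,2)])
  have "U (pol x) = (\<Sum>xs\<in>S. \<Sum>as\<in>A. D (pol x) xs * (pol x xs as * R xs as))" by (rule U_D[OF sp])
  also have "\<dots> = F x" unfolding F_def
    using D_pol[OF assms] x_eq[OF assms(1)] by (intro sum.cong refl) (simp add: mult.assoc)
  finally show ?thesis .
qed

lemma exists_opt:
  assumes "A \<noteq> {}"
  shows "\<exists>\<pi>. SP \<pi> \<and> perm_invariant N \<pi> \<and> (\<forall>\<pi>'. SP \<pi>' \<longrightarrow> U \<pi>' \<le> U \<pi>)"
proof -
  define \<pi>0 where "\<pi>0 = (\<lambda>(xs :: 's list) as. if as \<in> A then 1 / real (card A) else 0)"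
  have "SP \<pi>0"
    using assms unfolding stationary_policy_def \<pi>0_def by (simp add: card_gt_0_iff)
  then have Pne: "P \<noteq> {}" using occ_P by blast
  obtain xm where xm: "xm \<in> P" "\<And>y. y \<in> P \<Longrightarrow> F y \<le> F xm"
    using continuous_attains_sup[OF compact_P Pne continuous_F] by blast
  define xb where "xb = xbar xm"
  have xb: "xb \<in> P" "F xb = F xm" "symx xb"
    unfolding xb_def using xbar_P[OF xm(1)] F_xbar[OF xm(1)] xbar_sym by (auto simp: symx_def)
  show ?thesis
  proof (intro exI conjI allI impI)
    show "SP (pol xb)" by (rule pol_SP[OF xb(1) assms])
    show "perm_invariant N (pol xb)" by (rule pol_PI[OF xb(3)])
    fix \<pi>' :: "'s list \<Rightarrow> 'a list \<Rightarrow> real" assume sp: "SP \<pi>'"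
    have "U \<pi>' = F (occ \<pi>')" by (simp add: F_occ[OF sp])
    also have "\<dots> \<le> F xm" by (rule xm(2)[OF occ_P[OF sp]])
    also have "\<dots> = U (pol xb)" using U_pol[OF xb(1) assms] xb(2) by simp
    finally show "U \<pi>' \<le> U (pol xb)" .
  qed
qed

lemma sd_sym:
  assumes sp: "SP \<pi>" and pi: "perm_invariant N \<pi>" and t: "\<tau> permutes {..<N}"
  shows "ys \<in> S \<Longrightarrow> sd \<pi> n (perm_list \<tau> ys) = sd \<pi> n ys"
proof (induction n arbitrary: ys)
  case 0
  then show ?case using mu_sym[OF t] by simp
next
  case (Suc n)
  have "sd \<pi> (Suc n) (perm_list \<tau> ys) = (\<Sum>xs\<in>S. \<Sum>as\<in>A. sd \<pi> n xs * \<pi> xs as * T xs as (perm_list \<tau> ys))"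
    by simp
  also have "\<dots> = (\<Sum>xs\<in>S. \<Sum>as\<in>A. sd \<pi> n (perm_list \<tau> xs) * \<pi> (perm_list \<tau> xs) (perm_list \<tau> as)
        * T (perm_list \<tau> xs) (perm_list \<tau> as) (perm_list \<tau> ys))"
    by (rule reindex2[OF t, symmetric])
  also have "\<dots> = (\<Sum>xs\<in>S. \<Sum>as\<in>A. sd \<pi> n xs * \<pi> xs as * T xs as ys)"
  proof (intro sum.cong refl)
    fix xs as assume xs: "xs \<in> S" and as: "as \<in> A"
    have "\<pi> (perm_list \<tau> xs) (perm_list \<tau> as) = \<pi> xs as"
      using pi t S_len[OF xs] A_len[OF as] unfolding perm_invariant_def by metis
    then show "sd \<pi> n (perm_list \<tau> xs) * \<pi> (perm_list \<tau> xs) (perm_list \<tau> as)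
        * T (perm_list \<tau> xs) (perm_list \<tau> as) (perm_list \<tau> ys) = sd \<pi> n xs * \<pi> xs as * T xs as ys"
      using Suc.IH[OF xs] joint_trans_perm[OF t S_len[OF xs] A_len[OF as] S_len[OF Suc.prems]] by simp
  qed
  also have "\<dots> = sd \<pi> (Suc n) ys" by simp
  finally show ?case .
qed

lemma value_const:
  assumes sp: "SP \<pi>" and pi: "perm_invariant N \<pi>" and n: "n < N"
  shows "value_vec N K d b p r \<gamma> mu \<pi> n = value_vec N K d b p r \<gamma> mu \<pi> 0"
proof -
  define \<tau> where "\<tau> = Transposition.transpose 0 n"
  have t: "\<tau> permutes {..<N}" unfolding \<tau>_def using n by (intro permutes_swap_id) auto
  have Dsym: "D \<pi> (perm_list \<tau> xs) = D \<pi> xs" if "xs \<in> S" for xs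
    unfolding D_def using sd_sym[OF sp pi t that] by simp
  have "value_vec N K d b p r \<gamma> mu \<pi> 0 = (\<Sum>xs\<in>S. \<Sum>as\<in>A. D \<pi> xs * (\<pi> xs as * r (xs ! 0) (as ! 0)))"
    by (rule value_D[OF sp])
  also have "\<dots> = (\<Sum>xs\<in>S. \<Sum>as\<in>A. D \<pi> (perm_list \<tau> xs) * (\<pi> (perm_list \<tau> xs) (perm_list \<tau> as)
       * r (perm_list \<tau> xs ! 0) (perm_list \<tau> as ! 0)))"
    by (rule reindex2[OF t, symmetric])
  also have "\<dots> = (\<Sum>xs\<in>S. \<Sum>as\<in>A. D \<pi> xs * (\<pi> xs as * r (xs ! n) (as ! n)))"
  proof (intro sum.cong refl)
    fix xs as assume xs: "xs \<in> S" and as: "as \<in> A"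
    have "\<pi> (perm_list \<tau> xs) (perm_list \<tau> as) = \<pi> xs as"
      using pi t S_len[OF xs] A_len[OF as] unfolding perm_invariant_def by metis
    moreover have "perm_list \<tau> xs ! 0 = xs ! n" "perm_list \<tau> as ! 0 = as ! n"
      using n S_len[OF xs] A_len[OF as] by (simp_all add: \<tau>_def)
    ultimately show "D \<pi> (perm_list \<tau> xs) * (\<pi> (perm_list \<tau> xs) (perm_list \<tau> as)
       * r (perm_list \<tau> xs ! 0) (perm_list \<tau> as ! 0)) = D \<pi> xs * (\<pi> xs as * r (xs ! n) (as ! n))"
      using Dsym[OF xs] by simp
  qed
  also have "\<dots> = value_vec N K d b p r \<gamma> mu \<pi> n" by (rule value_D[OF sp, symmetric])
  finally show ?thesis by simp
qed

end

theorem theorem3p2: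
  fixes N K :: nat
    and p :: "'s::finite \<Rightarrow> 'a::finite \<Rightarrow> 's \<Rightarrow> real"
    and r :: "'s \<Rightarrow> 'a \<Rightarrow> real"
    and d :: "nat \<Rightarrow> 'a \<Rightarrow> real" and b :: "nat \<Rightarrow> real"
    and \<gamma> :: real and mu :: "'s list \<Rightarrow> real"
  assumes N_pos: "1 \<le> N"
    and p_nonneg: "\<And>s a s'. 0 \<le> p s a s'"
    and p_sum: "\<And>s a. (\<Sum>s'\<in>UNIV. p s a s') = 1"
    and d_nonneg: "\<And>k a. k < K \<Longrightarrow> 0 \<le> d k a"
    and b_nonneg: "\<And>k. k < K \<Longrightarrow> 0 \<le> b k"
    and idle: "\<exists>a0. \<forall>k<K. d k a0 = 0"
    and gamma: "0 \<le> \<gamma>" "\<gamma> < 1"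
    and mu_nonneg: "\<And>xs. xs \<in> joint_states N \<Longrightarrow> 0 \<le> mu xs"
    and mu_sum: "(\<Sum>xs \<in> joint_states N. mu xs) = 1"
    and mu_sym: "\<And>\<sigma> xs. \<sigma> permutes {..<N} \<Longrightarrow> xs \<in> joint_states N \<Longrightarrow> mu xs = mu (perm_list \<sigma> xs)"
  shows "opt_util_PI N K d b p r \<gamma> mu \<noteq> {} \<and>
    (\<forall>\<pi>s \<in> opt_util_PI N K d b p r \<gamma> mu. \<forall>w. gini_weights N w \<longrightarrow>
       (\<forall>\<pi>. stationary_policy N K d b \<pi> \<longrightarrow>
          GGF N w (value_vec N K d b p r \<gamma> mu \<pi>) \<le> GGF N w (value_vec N K d b p r \<gamma> mu \<pi>s)))"
proof -
  interpret wc N K p r d b \<gamma> mu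
    by unfold_locales (use p_nonneg p_sum gamma mu_nonneg mu_sum mu_sym in auto)
  have Ane: "joint_actions N K d b \<noteq> {}"
  proof -
    obtain a0 where a0: "\<forall>k<K. d k a0 = 0" using idle by blast
    have "replicate N a0 \<in> joint_actions N K d b"
      unfolding joint_actions_def using a0 b_nonneg by simp
    then show ?thesis by blast
  qed
  have Npos: "0 < real N" using N_pos by simp
  have GU: "GGF N (\<lambda>_. 1 / real N) (value_vec N K d b p r \<gamma> mu \<pi>) = U \<pi> / real N" for \<pi>
    by (simp add: GGF_util U_def)
  obtain \<pi>0 where \<pi>0: "stationary_policy N K d b \<pi>0" "perm_invariant N \<pi>0"
    "\<And>\<pi>'. stationary_policy N K d b \<pi>' \<Longrightarrow> U \<pi>' \<le> U \<pi>0"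
    using exists_opt[OF Ane] by blast
  have "\<pi>0 \<in> opt_util_PI N K d b p r \<gamma> mu"
    unfolding opt_util_PI_def mem_Collect_eq GU
  proof (intro conjI allI impI \<pi>0(1,2))
    fix \<pi>' :: "'s list \<Rightarrow> 'a list \<Rightarrow> real" assume "stationary_policy N K d b \<pi>'"
    then show "U \<pi>' / real N \<le> U \<pi>0 / real N"
      using \<pi>0(3) Npos by (intro divide_right_mono) auto
  qed
  then have ne: "opt_util_PI N K d b p r \<gamma> mu \<noteq> {}" by blast
  have part2: "GGF N w (value_vec N K d b p r \<gamma> mu \<pi>) \<le> GGF N w (value_vec N K d b p r \<gamma> mu \<pi>s)"
    if ps: "\<pi>s \<in> opt_util_PI N K d b p r \<gamma> mu" and w: "gini_weights N w"
      and sp: "stationary_policy N K d b \<pi>" for \<pi>s w \<pi>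
  proof -
    have sps: "stationary_policy N K d b \<pi>s" and pis: "perm_invariant N \<pi>s"
      and opt: "GGF N (\<lambda>_. 1 / real N) (value_vec N K d b p r \<gamma> mu \<pi>)
               \<le> GGF N (\<lambda>_. 1 / real N) (value_vec N K d b p r \<gamma> mu \<pi>s)"
      using ps sp unfolding opt_util_PI_def by auto
    have ws: "(\<Sum>n<N. w n) = 1" using w unfolding gini_weights_def by blast
    let ?V0 = "value_vec N K d b p r \<gamma> mu \<pi>s 0"
    have vc: "\<And>n. n < N \<Longrightarrow> value_vec N K d b p r \<gamma> mu \<pi>s n = ?V0"
      by (rule value_const[OF sps pis])
    have "GGF N w (value_vec N K d b p r \<gamma> mu \<pi>)
        \<le> (\<Sum>n<N. value_vec N K d b p r \<gamma> mu \<pi> n) / real N"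
      by (rule GGF_le_mean[OF ws N_pos])
    also have "\<dots> = GGF N (\<lambda>_. 1 / real N) (value_vec N K d b p r \<gamma> mu \<pi>)"
      by (simp add: GGF_util)
    also have "\<dots> \<le> GGF N (\<lambda>_. 1 / real N) (value_vec N K d b p r \<gamma> mu \<pi>s)"
      by (rule opt)
    also have "\<dots> = (\<Sum>n<N. value_vec N K d b p r \<gamma> mu \<pi>s n) / real N"
      by (simp add: GGF_util)
    also have "\<dots> = (\<Sum>n<N. ?V0) / real N"
      by (rule arg_cong[where f="\<lambda>s. s / real N"], rule sum.cong[OF refl], rule vc, simp)
    also have "\<dots> = ?V0" using Npos by simp
    also have "?V0 = GGF N w (value_vec N K d b p r \<gamma> mu \<pi>s)"
      by (rule GGF_const[OF vc ws, symmetric])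
    finally show ?thesis .
  qed
  show ?thesis using ne part2 by blast
qed

end
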